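(* Let $G=(V,E)$ be a directed graph, $s\neq t$ vertices, $k\ge 1$ an integer and $e(u,v)\in E$. Suppose that for all integers $0\le k_f,k_b\le k-1$ with $k_f+1+k_b\le k$, either (1) $EV^*_{k_f}(s,u)$ or $EV^*_{k_b}(v,t)$ does not exist, or (2) $EV^*_{k_f}(s,u)\cap EV^*_{k_b}(v,t)\neq\emptyset$. Then $e(u,v)$ is not an edge of $SPG_k(s,t)$.
   Context: A path from $x$ to $y$ in $G$ is a vertex sequence $x=v_0,\dots,v_l=y$ with $(v_{i-1},v_i)\in E$; its length is $l$ and $V(p)$, $E(p)$ are its vertex and edge sets. A simple path has no repeated vertex. $SPG_k(s,t)$ is the subgraph of $G$ formed by the union of vertex sets and edge sets of all simple paths from $s$ to $t$ of length at most $k$. For a vertex $u$ and integer $l\ge 0$, $EV^*_l(s,u)$ exists iff there is at least one simple path from $s$ to $u$ of length at most $l$ not containing $t$, and then $EV^*_l(s,u)$ is the intersection of $V(p)$ over all such paths. Symmetrically, $EV^*_l(v,t)$ exists iff there is at least one simple path from $v$ to $t$ of length at most $l$ not containing $s$, and then it is the intersection of $V(p)$ over all such paths. *)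

theory Defs
  imports Main
begin

definition is_path :: "('a \<times> 'a) set \<Rightarrow> 'a list \<Rightarrow> 'a \<Rightarrow> 'a \<Rightarrow> bool" where
  "is_path E p x y \<longleftrightarrow> p \<noteq> [] \<and> hd p = x \<and> last p = y \<and>
     (\<forall>i. Suc i < length p \<longrightarrow> (p ! i, p ! Suc i) \<in> E)"

definition path_len :: "'a list \<Rightarrow> nat" where
  "path_len p = length p - 1"

definition path_edges :: "'a list \<Rightarrow> ('a \<times> 'a) set" where
  "path_edges p = {(p ! i, p ! Suc i) | i. Suc i < length p}"

definition simple_path :: "('a \<times> 'a) set \<Rightarrow> 'a list \<Rightarrow> 'a \<Rightarrow> 'a \<Rightarrow> bool" where
  "simple_path E p x y \<longleftrightarrow> is_path E p x y \<and> distinct p"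

definition SPG_edges :: "('a \<times> 'a) set \<Rightarrow> nat \<Rightarrow> 'a \<Rightarrow> 'a \<Rightarrow> ('a \<times> 'a) set" where
  "SPG_edges E k s t = \<Union> {path_edges p | p. simple_path E p s t \<and> path_len p \<le> k}"

definition fwd_paths :: "('a \<times> 'a) set \<Rightarrow> 'a \<Rightarrow> 'a \<Rightarrow> nat \<Rightarrow> 'a \<Rightarrow> 'a list set" where
  "fwd_paths E s t l u = {p. simple_path E p s u \<and> path_len p \<le> l \<and> t \<notin> set p}"

definition EVf_exists :: "('a \<times> 'a) set \<Rightarrow> 'a \<Rightarrow> 'a \<Rightarrow> nat \<Rightarrow> 'a \<Rightarrow> bool" where
  "EVf_exists E s t l u \<longleftrightarrow> fwd_paths E s t l u \<noteq> {}"

definition EVf :: "('a \<times> 'a) set \<Rightarrow> 'a \<Rightarrow> 'a \<Rightarrow> nat \<Rightarrow> 'a \<Rightarrow> 'a set" where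
  "EVf E s t l u = (\<Inter>p \<in> fwd_paths E s t l u. set p)"

definition bwd_paths :: "('a \<times> 'a) set \<Rightarrow> 'a \<Rightarrow> 'a \<Rightarrow> nat \<Rightarrow> 'a \<Rightarrow> 'a list set" where
  "bwd_paths E s t l v = {p. simple_path E p v t \<and> path_len p \<le> l \<and> s \<notin> set p}"

definition EVb_exists :: "('a \<times> 'a) set \<Rightarrow> 'a \<Rightarrow> 'a \<Rightarrow> nat \<Rightarrow> 'a \<Rightarrow> bool" where
  "EVb_exists E s t l v \<longleftrightarrow> bwd_paths E s t l v \<noteq> {}"

definition EVb :: "('a \<times> 'a) set \<Rightarrow> 'a \<Rightarrow> 'a \<Rightarrow> nat \<Rightarrow> 'a \<Rightarrow> 'a set" where
  "EVb E s t l v = (\<Inter>p \<in> bwd_paths E s t l v. set p)"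

end

theory Submission
  imports Defs
begin

theorem theorem3p4:
  fixes E :: "('a \<times> 'a) set" and s t u v :: 'a and k :: nat
  assumes "s \<noteq> t" and "k \<ge> 1" and "(u, v) \<in> E"
    and "\<forall>kf kb. kf \<le> k - 1 \<and> kb \<le> k - 1 \<and> kf + 1 + kb \<le> k \<longrightarrow>
           (\<not> EVf_exists E s t kf u \<or> \<not> EVb_exists E s t kb v) \<or>
           EVf E s t kf u \<inter> EVb E s t kb v \<noteq> {}"
  shows "(u, v) \<notin> SPG_edges E k s t"
proof
  assume "(u, v) \<in> SPG_edges E k s t"
  then obtain p where sp: "simple_path E p s t" and pl: "path_len p \<le> k"
    and ed: "(u, v) \<in> path_edges p"
    unfolding SPG_edges_def by blast
  from ed obtain i where ui: "u = p ! i" and vi: "v = p ! Suc i" and il: "Suc i < length p"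
    unfolding path_edges_def by blast
  have ne: "p \<noteq> []" and hd: "hd p = s" and lst: "last p = t"
    and stp: "\<And>j. Suc j < length p \<Longrightarrow> (p ! j, p ! Suc j) \<in> E" and dp: "distinct p"
    using sp unfolding simple_path_def is_path_def by auto
  define p1 where "p1 = take (Suc i) p"
  define p2 where "p2 = drop (Suc i) p"
  have pp: "p = p1 @ p2" unfolding p1_def p2_def by simp
  have l1: "length p1 = Suc i" using il unfolding p1_def by simp
  have l2: "length p2 = length p - Suc i" unfolding p2_def by simp
  have disj: "set p1 \<inter> set p2 = {}" using dp pp by (metis distinct_append)
  have s0: "p ! 0 = s" using ne hd by (simp add: hd_conv_nth)
  have tl: "p ! (length p - 1) = t" using ne lst by (simp add: last_conv_nth)
  have tin2: "t \<in> set p2"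
    using il lst unfolding p2_def by (metis last_drop last_in_set drop_eq_Nil not_less)
  have "p1 ! 0 = s" using s0 unfolding p1_def by simp
  then have sin1: "s \<in> set p1" using l1 by (metis nth_mem zero_less_Suc)
  have t1: "t \<notin> set p1" using disj tin2 by blast
  have s2: "s \<notin> set p2" using disj sin1 by blast
  have fw: "p1 \<in> fwd_paths E s t i u"
    unfolding fwd_paths_def simple_path_def is_path_def path_len_def
  proof (intro CollectI conjI allI impI)
    show "p1 \<noteq> []" using l1 by auto
    show "hd p1 = s" using hd ne unfolding p1_def by simp
    show "last p1 = u" using l1 ui il unfolding p1_def by (subst last_conv_nth) auto
    show "(p1 ! j, p1 ! Suc j) \<in> E" if "Suc j < length p1" for j
      using that stp[of j] l1 il unfolding p1_def by simp
    show "distinct p1" using dp unfolding p1_def by simp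
    show "length p1 - 1 \<le> i" using l1 by simp
    show "t \<notin> set p1" by (rule t1)
  qed
  have bw: "p2 \<in> bwd_paths E s t (length p - 2 - i) v"
    unfolding bwd_paths_def simple_path_def is_path_def path_len_def
  proof (intro CollectI conjI allI impI)
    show "p2 \<noteq> []" using l2 il by auto
    show "hd p2 = v" using vi il unfolding p2_def by (simp add: hd_drop_conv_nth)
    show "last p2 = t" using lst il unfolding p2_def by simp
    show "(p2 ! j, p2 ! Suc j) \<in> E" if "Suc j < length p2" for j
      using that stp[of "Suc i + j"] l2 il unfolding p2_def by simp
    show "distinct p2" using dp unfolding p2_def by simp
    show "length p2 - 1 \<le> length p - 2 - i" using l2 by simp
    show "s \<notin> set p2" by (rule s2)
  qed
  have k1: "path_len p = length p - 1" unfolding path_len_def by simp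
  have c: "i \<le> k - 1 \<and> length p - 2 - i \<le> k - 1 \<and> i + 1 + (length p - 2 - i) \<le> k"
    using pl k1 il by auto
  have ex1: "EVf_exists E s t i u" using fw unfolding EVf_exists_def by blast
  have ex2: "EVb_exists E s t (length p - 2 - i) v" using bw unfolding EVb_exists_def by blast
  have "EVf E s t i u \<subseteq> set p1" using fw unfolding EVf_def by blast
  moreover have "EVb E s t (length p - 2 - i) v \<subseteq> set p2" using bw unfolding EVb_def by blast
  ultimately have "EVf E s t i u \<inter> EVb E s t (length p - 2 - i) v = {}" using disj by blast
  then show False using assms(4) c ex1 ex2 by blast
qed

end
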